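(* Let $N=\{1,\ldots,n\}$ and let $\mathscr{D}$ be a family of subsets in $2^N\setminus\{\varnothing,N\}$. Let $v_{\mathscr{D}}$ be the game defined by $v_{\mathscr{D}}(S)=1$ if $S\in\mathscr{D}$ or $S=N$, and $v_{\mathscr{D}}(S)=0$ otherwise. Then $v_{\mathscr{D}}$ is a vertex of $\mathscr{BG}_+(n)$ if and only if either $\mathscr{D}=\varnothing$ or $\bigcap_{S\in\mathscr{D}}S\neq\varnothing$.
   Context: A game on $N$ is a map $v:2^N\to\mathbb{R}$ with $v(\varnothing)=0$. $\mathscr{G}_+(n)$ is the set of games with $v\geqslant 0$ and $v(N)=1$. The core of $v$ is $C(v)=\{x\in\mathbb{R}^N: \sum_{i\in S}x_i\geqslant v(S)\ \forall S,\ \sum_{i\in N}x_i=v(N)\}$, and $v$ is balanced iff $C(v)\neq\varnothing$. $\mathscr{BG}_+(n)$ is the polytope of balanced games in $\mathscr{G}_+(n)$, in $\mathbb{R}^{2^N\setminus\{\varnothing,N\}}$. *)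

theory Defs
  imports "HOL-Analysis.Analysis"
begin

text \<open>The player set N = {1..n}.  A game on N is represented as a function
  v :: nat set => real; we only consider games that vanish outside Pow N
  (canonical representative), with v {} = 0.\<close>

definition players :: "nat \<Rightarrow> nat set" where
  "players n = {1..n}"

definition core :: "nat \<Rightarrow> (nat set \<Rightarrow> real) \<Rightarrow> (nat \<Rightarrow> real) set" where
  "core n v = {x. (\<forall>i. i \<notin> players n \<longrightarrow> x i = 0)
                \<and> (\<forall>S. S \<subseteq> players n \<longrightarrow> (\<Sum>i\<in>S. x i) \<ge> v S)
                \<and> (\<Sum>i\<in>players n. x i) = v (players n)}"

definition balanced :: "nat \<Rightarrow> (nat set \<Rightarrow> real) \<Rightarrow> bool" where
  "balanced n v \<longleftrightarrow> core n v \<noteq> {}"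

definition G_plus :: "nat \<Rightarrow> (nat set \<Rightarrow> real) set" where
  "G_plus n = {v. v {} = 0 \<and> (\<forall>S. \<not> S \<subseteq> players n \<longrightarrow> v S = 0)
               \<and> (\<forall>S. S \<subseteq> players n \<longrightarrow> v S \<ge> 0) \<and> v (players n) = 1}"

definition BG_plus :: "nat \<Rightarrow> (nat set \<Rightarrow> real) set" where
  "BG_plus n = {v \<in> G_plus n. balanced n v}"

text \<open>Vertex (extreme point) of a set of games, spelled out as the library's
  extreme_point_of (x in P and x lies in no open segment between points of P),
  since the function space nat set => real carries no real_vector instance.\<close>
definition vertex_of :: "(nat set \<Rightarrow> real) \<Rightarrow> (nat set \<Rightarrow> real) set \<Rightarrow> bool" where
  "vertex_of x P \<longleftrightarrow> x \<in> P \<and>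
     (\<forall>a\<in>P. \<forall>b\<in>P. \<forall>u::real. a \<noteq> b \<and> 0 < u \<and> u < 1 \<longrightarrow>
        x \<noteq> (\<lambda>S. (1 - u) * a S + u * b S))"

definition v_fam :: "nat \<Rightarrow> nat set set \<Rightarrow> (nat set \<Rightarrow> real)" where
  "v_fam n D = (\<lambda>S. if S \<in> D \<or> S = players n then 1 else 0)"

end

theory Submission
  imports Defs
begin

lemma fin_players: "finite (players n)"
  by (simp add: players_def)

lemma BG_le1:
  assumes a: "a \<in> BG_plus n" and S: "S \<subseteq> players n"
  shows "a S \<le> 1"
proof -
  from a obtain x where x: "x \<in> core n a" and g: "a \<in> G_plus n"
    by (auto simp: BG_plus_def balanced_def)
  have s1: "(\<Sum>i\<in>S. x i) \<ge> a S" using x S by (auto simp: core_def)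
  have s2: "(\<Sum>i\<in>players n - S. x i) \<ge> a (players n - S)" using x by (auto simp: core_def)
  have s3: "a (players n - S) \<ge> 0" using g by (auto simp: G_plus_def)
  have s4: "(\<Sum>i\<in>players n. x i) = 1" using x g by (auto simp: core_def G_plus_def)
  have "(\<Sum>i\<in>players n. x i) = (\<Sum>i\<in>players n - S. x i) + (\<Sum>i\<in>S. x i)"
    using sum.subset_diff[OF S fin_players] by simp
  then show ?thesis using s1 s2 s3 s4 by linarith
qed

lemma not_bal:
  assumes D: "D \<subseteq> Pow (players n)" and ne: "D \<noteq> {}" and e: "\<Inter> D = {}"
  shows "\<not> balanced n (v_fam n D)"
proof
  assume "balanced n (v_fam n D)"
  then obtain x where x: "x \<in> core n (v_fam n D)" by (auto simp: balanced_def)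
  have nn: "x i \<ge> 0" if "i \<in> players n" for i
  proof -
    have "(\<Sum>j\<in>{i}. x j) \<ge> v_fam n D {i}" using x that by (auto simp: core_def)
    moreover have "v_fam n D {i} \<ge> 0" by (simp add: v_fam_def)
    ultimately show ?thesis by simp
  qed
  have tot: "(\<Sum>i\<in>players n. x i) = 1" using x by (auto simp: core_def v_fam_def)
  have z: "x i = 0" if i: "i \<in> players n" for i
  proof -
    obtain S where S: "S \<in> D" "i \<notin> S" using e i ne by blast
    have SN: "S \<subseteq> players n" using S D by blast
    have "(\<Sum>j\<in>S. x j) \<ge> v_fam n D S" using x SN by (auto simp: core_def)
    then have g1: "(\<Sum>j\<in>S. x j) \<ge> 1" using S by (simp add: v_fam_def)
    have "(\<Sum>j\<in>players n. x j) = (\<Sum>j\<in>players n - S. x j) + (\<Sum>j\<in>S. x j)"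
      using sum.subset_diff[OF SN fin_players] by simp
    then have le: "(\<Sum>j\<in>players n - S. x j) \<le> 0" using tot g1 by linarith
    have "(\<Sum>j\<in>players n - S. x j) \<ge> x i"
      using i S nn by (intro member_le_sum) (auto simp: fin_players)
    then show ?thesis using le nn[OF i] by linarith
  qed
  have "(\<Sum>i\<in>players n. x i) = 0" using z by simp
  then show False using tot by simp
qed

lemma in_BG:
  assumes n: "n \<ge> 1" and D: "D \<subseteq> Pow (players n) - {{}, players n}"
    and c: "D = {} \<or> \<Inter> D \<noteq> {}"
  shows "v_fam n D \<in> BG_plus n"
proof -
  have 1: "1 \<in> players n" using n by (simp add: players_def)
  obtain i where i: "i \<in> players n" "\<forall>S\<in>D. i \<in> S"
  proof (cases "D = {}")
    case True then show ?thesis using that 1 by blast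
  next
    case False
    then obtain i where "i \<in> \<Inter> D" using c by blast
    moreover obtain S where "S \<in> D" using False by blast
    ultimately show ?thesis using that D by blast
  qed
  define x where "x = (\<lambda>j. if j = i then (1::real) else 0)"
  have sx: "(\<Sum>j\<in>S. x j) = (if i \<in> S then 1 else 0)" if "finite S" for S
    using that by (simp add: x_def sum.delta)
  have "x \<in> core n (v_fam n D)"
    unfolding core_def
  proof (intro CollectI conjI allI impI)
    fix j assume "j \<notin> players n" then show "x j = 0" using i by (auto simp: x_def)
  next
    fix S assume S: "S \<subseteq> players n"
    then have "finite S" using fin_players finite_subset by blast
    then show "(\<Sum>j\<in>S. x j) \<ge> v_fam n D S" using sx i by (auto simp: v_fam_def)
  next
    show "(\<Sum>j\<in>players n. x j) = v_fam n D (players n)"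
      using sx[OF fin_players] i by (simp add: v_fam_def)
  qed
  then have "balanced n (v_fam n D)" by (auto simp: balanced_def)
  moreover have "v_fam n D \<in> G_plus n"
    using D 1 by (auto simp: G_plus_def v_fam_def)
  ultimately show ?thesis by (simp add: BG_plus_def)
qed

theorem theorem9:
  fixes n :: nat and D :: "nat set set"
  assumes "n \<ge> 1"
    and "D \<subseteq> Pow (players n) - {{}, players n}"
  shows "vertex_of (v_fam n D) (BG_plus n) \<longleftrightarrow> (D = {} \<or> \<Inter> D \<noteq> {})"
proof
  assume v: "vertex_of (v_fam n D) (BG_plus n)"
  show "D = {} \<or> \<Inter> D \<noteq> {}"
  proof (rule ccontr)
    assume "\<not> (D = {} \<or> \<Inter> D \<noteq> {})"
    then have "\<not> balanced n (v_fam n D)" using not_bal assms(2) by blast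
    then show False using v by (simp add: vertex_of_def BG_plus_def)
  qed
next
  assume c: "D = {} \<or> \<Inter> D \<noteq> {}"
  have mem: "v_fam n D \<in> BG_plus n" using in_BG assms c by blast
  show "vertex_of (v_fam n D) (BG_plus n)"
    unfolding vertex_of_def
  proof (intro conjI mem ballI allI impI)
    fix a b u assume a: "a \<in> BG_plus n" and b: "b \<in> BG_plus n"
      and h: "a \<noteq> b \<and> 0 < u \<and> (u::real) < 1"
    show "v_fam n D \<noteq> (\<lambda>S. (1 - u) * a S + u * b S)"
    proof
      assume eq: "v_fam n D = (\<lambda>S. (1 - u) * a S + u * b S)"
      have ga: "a \<in> G_plus n" and gb: "b \<in> G_plus n" using a b by (auto simp: BG_plus_def)
      have "a S = b S" for S
      proof (cases "S \<subseteq> players n")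
        case False then show ?thesis using ga gb by (auto simp: G_plus_def)
      next
        case True
        have e: "v_fam n D S = (1 - u) * a S + u * b S" using eq by metis
        have a0: "a S \<ge> 0" "b S \<ge> 0" using ga gb True by (auto simp: G_plus_def)
        have a1: "a S \<le> 1" "b S \<le> 1" using BG_le1 a b True by auto
        have u: "0 < u" "u < 1" using h by auto
        show ?thesis
        proof (cases "S \<in> D \<or> S = players n")
          case True
          then have "(1 - u) * a S + u * b S = 1" using e by (simp add: v_fam_def)
          moreover have "(1 - u) * a S \<le> (1 - u)" using a1 u by simp
          moreover have "u * b S \<le> u" using a1 u by simp
          moreover have "(1-u) * (1 - a S) \<ge> 0" "u * (1 - b S) \<ge> 0" using a1 u by simp_all
          moreover have "(1-u) * (1 - a S) + u * (1 - b S) = 1 - ((1 - u) * a S + u * b S)"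
            by (simp add: algebra_simps)
          ultimately have "(1-u) * (1 - a S) = 0" "u * (1 - b S) = 0" by linarith+
          then show ?thesis using u by simp
        next
          case False
          then have "(1 - u) * a S + u * b S = 0" using e by (simp add: v_fam_def)
          moreover have "(1-u) * a S \<ge> 0" "u * b S \<ge> 0" using a0 u by simp_all
          ultimately have "(1-u) * a S = 0" "u * b S = 0" by linarith+
          then show ?thesis using u by simp
        qed
      qed
      then show False using h by auto
    qed
  qed
qed

end
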